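(* Let $T\in\mathcal{T}^*_3$ with root $v$ and $n$ vertices. Then \[\lambda(T,v)\ge 1+\sum_{j\ge 0}c_j m_j(T,v),\] where the numbers $c_j$ ($j\ge 0$) are defined recursively by \[c_j=1-\frac{1+\frac{j}{2}+\sum_{i=0}^{j-1}c_i}{2^{j+1}+j}\] (so $c_0=\frac12$).
   Context: All trees are finite. A subtree of a tree $T$ is a nonempty vertex set inducing a connected subgraph. For a vertex $v$, $\lambda(T,v)$ is the average number of vertices of a subtree of $T$ containing $v$, averaged uniformly over all subtrees containing $v$. $\mathcal{T}^*_3$ is the set of rooted trees in which the root has degree at least 2 and every other vertex of degree at least 2 has degree at least 3, together with the single-vertex rooted tree. In a rooted tree with root $v$, each vertex $w\neq v$ has as parent its neighbour on the path from $v$ to $w$, and its other neighbours are its children. The rank of a non-root vertex is defined inductively: a vertex with no children has rank 0, and otherwise its rank is one more than the maximum rank of its children (equivalently, the maximum length of a path starting at the vertex and not containing its parent). The root has no rank. $m_j(T,v)$ denotes the number of vertices of rank $j$ when $T$ is rooted at $v$. *)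

theory Defs
  imports Main "HOL.Real"
begin

definition sym_graph :: "'a set \<Rightarrow> ('a \<Rightarrow> 'a \<Rightarrow> bool) \<Rightarrow> bool" where
  "sym_graph V E \<longleftrightarrow> (\<forall>x y. E x y \<longrightarrow> E y x \<and> x \<noteq> y \<and> x \<in> V \<and> y \<in> V)"

definition induces_connected :: "('a \<Rightarrow> 'a \<Rightarrow> bool) \<Rightarrow> 'a set \<Rightarrow> bool" where
  "induces_connected E S \<longleftrightarrow> S \<noteq> {} \<and>
     (\<forall>x\<in>S. \<forall>y\<in>S. (\<lambda>a b. E a b \<and> a \<in> S \<and> b \<in> S)\<^sup>*\<^sup>* x y)"

definition edges :: "('a \<Rightarrow> 'a \<Rightarrow> bool) \<Rightarrow> 'a set set" where
  "edges E = {{x, y} | x y. E x y}"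

definition is_tree :: "'a set \<Rightarrow> ('a \<Rightarrow> 'a \<Rightarrow> bool) \<Rightarrow> bool" where
  "is_tree V E \<longleftrightarrow> finite V \<and> sym_graph V E \<and> induces_connected E V
     \<and> card (edges E) = card V - 1"

definition degree :: "('a \<Rightarrow> 'a \<Rightarrow> bool) \<Rightarrow> 'a \<Rightarrow> nat" where
  "degree E w = card {u. E w u}"

definition is_path :: "'a set \<Rightarrow> ('a \<Rightarrow> 'a \<Rightarrow> bool) \<Rightarrow> 'a list \<Rightarrow> bool" where
  "is_path V E xs \<longleftrightarrow> xs \<noteq> [] \<and> set xs \<subseteq> V \<and> distinct xs \<and>
     (\<forall>i. Suc i < length xs \<longrightarrow> E (xs ! i) (xs ! Suc i))"

definition parent :: "'a set \<Rightarrow> ('a \<Rightarrow> 'a \<Rightarrow> bool) \<Rightarrow> 'a \<Rightarrow> 'a \<Rightarrow> 'a" where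
  "parent V E v w = (THE u. \<exists>xs. is_path V E (xs @ [u, w]) \<and> hd (xs @ [u, w]) = v)"

definition rank :: "'a set \<Rightarrow> ('a \<Rightarrow> 'a \<Rightarrow> bool) \<Rightarrow> 'a \<Rightarrow> 'a \<Rightarrow> nat" where
  "rank V E v w = Max {length xs - 1 | xs. is_path V E xs \<and> hd xs = w
                                           \<and> parent V E v w \<notin> set xs}"

definition m_rank :: "'a set \<Rightarrow> ('a \<Rightarrow> 'a \<Rightarrow> bool) \<Rightarrow> 'a \<Rightarrow> nat \<Rightarrow> nat" where
  "m_rank V E v j = card {w \<in> V. w \<noteq> v \<and> rank V E v w = j}"

definition in_T3star :: "'a set \<Rightarrow> ('a \<Rightarrow> 'a \<Rightarrow> bool) \<Rightarrow> 'a \<Rightarrow> bool" where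
  "in_T3star V E v \<longleftrightarrow> V = {v} \<or>
     (degree E v \<ge> 2 \<and> (\<forall>w\<in>V. w \<noteq> v \<longrightarrow> degree E w \<ge> 2 \<longrightarrow> degree E w \<ge> 3))"

definition subtrees_at :: "'a set \<Rightarrow> ('a \<Rightarrow> 'a \<Rightarrow> bool) \<Rightarrow> 'a \<Rightarrow> 'a set set" where
  "subtrees_at V E v = {S. S \<subseteq> V \<and> v \<in> S \<and> induces_connected E S}"

definition local_mean :: "'a set \<Rightarrow> ('a \<Rightarrow> 'a \<Rightarrow> bool) \<Rightarrow> 'a \<Rightarrow> real" where
  "local_mean V E v = (\<Sum>S\<in>subtrees_at V E v. real (card S)) / real (card (subtrees_at V E v))"

text \<open>The constants c_j: clist k = [c_0, ..., c_{k-1}].\<close>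
fun clist :: "nat \<Rightarrow> real list" where
  "clist 0 = []"
| "clist (Suc j) = clist j @
     [1 - (1 + real j / 2 + sum_list (clist j)) / (2 ^ (j + 1) + real j)]"

definition cc :: "nat \<Rightarrow> real" where
  "cc j = clist (Suc j) ! j"

end

theory Submission
  imports Defs
begin



lemma clist_len: "length (clist j) = j"
  by (induction j) auto

lemma clist_nth: "i < j \<Longrightarrow> clist j ! i = cc i"
proof (induction j)
  case 0 then show ?case by simp
next
  case (Suc j)
  show ?case
  proof (cases "i < j")
    case True then show ?thesis using Suc by (simp add: nth_append clist_len)
  next
    case False then have "i = j" using Suc by simp
    then show ?thesis by (simp add: cc_def)
  qed
qed

lemma clist_sum: "sum_list (clist j) = (\<Sum>i<j. cc i)"
  by (simp add: sum_list_sum_nth clist_len clist_nth atLeast0LessThan)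

definition aa :: "nat \<Rightarrow> real" where
  "aa j = (1 + real j / 2 + (\<Sum>i<j. cc i)) / (2 ^ (j + 1) + real j)"

lemma cc_aa: "cc j = 1 - aa j"
  apply (subst cc_def)
  by (simp add: aa_def nth_append clist_len clist_sum)

lemma cc_bounds: "1/2 \<le> cc j \<and> cc j \<le> 1"
proof (induction j rule: less_induct)
  case (less j)
  have s1: "(\<Sum>i<j. cc i) \<le> real j" using less
    using sum_mono[of "{..<j}" cc "\<lambda>_. 1"] by simp
  have s0: "(\<Sum>i<j. cc i) \<ge> real j / 2" using less
    using sum_mono[of "{..<j}" "\<lambda>_. 1/2" cc] by simp
  have p: "(1 + real j) \<le> 2 ^ j"
  proof -
    have "j + 1 \<le> 2 ^ j" by (induction j) auto
    then have "real (j+1) \<le> real (2^j)" by linarith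
    then show ?thesis by simp
  qed
  have B: "2 ^ (j + 1) + real j > 0" by (simp add: add_pos_nonneg)
  have "aa j \<le> 1/2"
    unfolding aa_def using B s1 p by (simp add: divide_simps)
  moreover have "aa j \<ge> 0" unfolding aa_def using B s0 by simp
  ultimately show ?case by (simp add: cc_aa)
qed

lemma aa_bounds: "0 \<le> aa j" "aa j \<le> 1/2"
  using cc_bounds[of j] by (simp_all add: cc_aa)

lemma aa_lower: "aa j * (2 ^ (j + 1) + real j) \<ge> 1 + real j"
proof -
  have s0: "(\<Sum>i<j. cc i) \<ge> real j / 2"
    using sum_mono[of "{..<j}" "\<lambda>_. 1/2" cc] cc_bounds by simp
  have B: "2 ^ (j + 1) + real j > 0" by (simp add: add_pos_nonneg)
  show ?thesis unfolding aa_def using B s0 by simp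
qed

lemma aa_Suc: "aa (Suc r) * (2 * 2^(Suc r) + real (Suc r)) = aa r * (2^Suc r + real r) + 3/2 - aa r"
proof -
  have B: "2 ^ (r + 1) + real r > 0" by (simp add: add_pos_nonneg)
  have B2: "2 * 2 ^ (Suc r) + real (Suc r) > 0" by (simp add: add_pos_nonneg)
  have "aa (Suc r) * (2 * 2^(Suc r) + real (Suc r)) = 1 + real (Suc r)/2 + (\<Sum>i<Suc r. cc i)"
    unfolding aa_def using B2 by simp
  also have "\<dots> = (1 + real r / 2 + (\<Sum>i<r. cc i)) + 1/2 + cc r" by (simp add: field_simps)
  also have "1 + real r / 2 + (\<Sum>i<r. cc i) = aa r * (2^Suc r + real r)"
    unfolding aa_def using B by simp
  finally show ?thesis by (simp add: cc_aa)
qed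

lemma key_ineq:
  fixes Q X :: real
  assumes r: "r \<ge> 1" and Q: "Q \<ge> 2" and X: "X \<ge> 3 * 2 ^ (r - 1) - 1"
  shows "cc r + (Q - 1) / 2 + aa (r - 1) * (X - 1) \<le> aa r * Q * X"
proof -
  obtain s where s: "r = Suc s" using r by (cases r) auto
  define t :: real where "t = 2 ^ r"
  define q where "q = aa s"
  define ar where "ar = aa r"
  have t: "t \<ge> 1 + real r"
  proof -
    have "r + 1 \<le> 2 ^ r" by (induction r) auto
    then have "real (r+1) \<le> real (2^r)" by linarith
    then show ?thesis by (simp add: t_def)
  qed
  have t2: "t \<ge> 2" using t r by simp
  have q0: "0 \<le> q" "q \<le> 1/2" using aa_bounds q_def by auto
  have Bpos: "2 * t + real r > 0" using t2 by simp
  have rel: "ar * (2 * t + real r) = q * (t + real s) + 3/2 - q"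
    using aa_Suc[of s] by (simp add: s t_def ar_def q_def)
  have X0: "X \<ge> 3 * t / 2 - 1" using X by (simp add: s t_def)
  have low: "ar * (2 * t + real r) \<ge> 1 + real r"
    using aa_lower[of r] by (simp add: ar_def t_def)
  have h1: "ar * X \<ge> 1/2"
  proof -
    have "ar * X * (2 * t + real r) = (ar * (2 * t + real r)) * X" by simp
    also have "\<dots> \<ge> (1 + real r) * (3 * t / 2 - 1)"
      apply (rule mult_mono) using low X0 t2 by auto
    finally have A: "ar * X * (2 * t + real r) \<ge> (1 + real r) * (3 * t / 2 - 1)" .
    have "(1 + real r) * (3 * t / 2 - 1) \<ge> (2 * t + real r) / 2"
    proof -
      have "(1 + real r) * (3 * t / 2 - 1) \<ge> 2 * (3 * t / 2 - 1)"
        apply (rule mult_right_mono) using r t2 by auto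
      then show ?thesis using t r by simp
    qed
    then have "ar * X * (2 * t + real r) \<ge> (1/2) * (2 * t + real r)" using A by simp
    then show ?thesis using Bpos by (simp add: mult_le_cancel_right)
  qed
  have h2: "2 * ar \<ge> q"
  proof -
    have "2 * ar * (2 * t + real r) - q * (2 * t + real r) = q * (real r - 4) + 3"
      using rel s by (simp add: algebra_simps)
    also have "\<dots> \<ge> 0"
    proof -
      have "q * (real r - 4) \<ge> q * (-4)" using mult_left_mono[of "-4" "real r - 4" q] q0 by simp
      then show ?thesis using q0 by linarith
    qed
    finally have "(2 * ar - q) * (2 * t + real r) \<ge> 0" by (simp add: algebra_simps)
    then show ?thesis using Bpos by (simp add: zero_le_mult_iff)
  qed
  have h3: "ar * (3 * t - 1) - 3/2 - q * (3 * t / 2 - 2) \<ge> 0"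
  proof -
    have "(ar * (3 * t - 1) - 3/2 - q * (3 * t / 2 - 2)) * (2 * t + real r)
        = q * ((3/2 * real r - 3) * t + real r + 2) + 3/2 * (t - 1 - real r)"
    proof -
      have "(ar * (3 * t - 1) - 3/2 - q * (3 * t / 2 - 2)) * (2 * t + real r)
          = (ar * (2 * t + real r)) * (3 * t - 1) - 3/2 * (2 * t + real r) - q * (3 * t / 2 - 2) * (2 * t + real r)"
        by (simp add: algebra_simps)
      also have "\<dots> = (q * (t + real s) + 3/2 - q) * (3 * t - 1) - 3/2 * (2 * t + real r) - q * (3 * t / 2 - 2) * (2 * t + real r)"
        using rel by simp
      also have "\<dots> = q * ((3/2 * real r - 3) * t + real r + 2) + 3/2 * (t - 1 - real r)"
        using s by (simp add: field_simps)
      finally show ?thesis .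
    qed
    also have "\<dots> \<ge> 0"
    proof -
      have "(3/2 * real r - 3) * t + real r + 2 \<ge> 0"
      proof (cases "r = 1")
        case True then show ?thesis by (simp add: t_def)
      next
        case False then have "real r \<ge> 2" using r by simp
        then have "(3/2 * real r - 3) * t \<ge> 0" using t2 by simp
        then show ?thesis by simp
      qed
      then show ?thesis using q0 t by simp
    qed
    finally show ?thesis using Bpos by (simp add: zero_le_mult_iff)
  qed
  have "aa r * Q * X - (cc r + (Q - 1) / 2 + aa (r - 1) * (X - 1))
      = (Q - 2) * (ar * X - 1/2) + ((X - (3 * t / 2 - 1)) * (2 * ar - q)
        + (ar * (3 * t - 1) - 3/2 - q * (3 * t / 2 - 2)))"
    by (simp add: cc_aa ar_def q_def s field_simps)
  also have "\<dots> \<ge> 0"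
    using h1 h2 h3 Q X0 by (simp add: add_nonneg_nonneg mult_nonneg_nonneg)
  finally show ?thesis by simp
qed




abbreviation rS :: "('a \<Rightarrow> 'a \<Rightarrow> bool) \<Rightarrow> 'a set \<Rightarrow> 'a \<Rightarrow> 'a \<Rightarrow> bool" where
  "rS E S \<equiv> (\<lambda>a b. E a b \<and> a \<in> S \<and> b \<in> S)"

lemma is_path_Cons:
  "is_path S E (x # xs) \<longleftrightarrow> x \<in> S \<and> (xs = [] \<or> (is_path S E xs \<and> x \<notin> set xs \<and> E x (hd xs)))"
proof (cases xs)
  case Nil then show ?thesis by (simp add: is_path_def)
next
  case (Cons y ys)
  have "(\<forall>i. Suc i < length (x # y # ys) \<longrightarrow> E ((x # y # ys) ! i) ((x # y # ys) ! Suc i))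
    \<longleftrightarrow> E x y \<and> (\<forall>i. Suc i < length (y # ys) \<longrightarrow> E ((y # ys) ! i) ((y # ys) ! Suc i))"
    (is "?L \<longleftrightarrow> ?R")
  proof
    assume ?L
    show ?R
    proof
      show "E x y" using spec[OF \<open>?L\<close>, of 0] by simp
      show "\<forall>i. Suc i < length (y # ys) \<longrightarrow> E ((y # ys) ! i) ((y # ys) ! Suc i)"
        using \<open>?L\<close> by (metis Suc_less_eq length_Cons nth_Cons_Suc)
    qed
  next
    assume ?R
    show ?L
    proof (intro allI impI)
      fix i assume "Suc i < length (x # y # ys)"
      then show "E ((x # y # ys) ! i) ((x # y # ys) ! Suc i)"
        using \<open>?R\<close> by (cases i) auto
    qed
  qed
  then show ?thesis using Cons by (auto simp: is_path_def)
qed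

lemma is_path_single[simp]: "is_path S E [x] \<longleftrightarrow> x \<in> S"
  by (simp add: is_path_Cons)

lemma is_path_append_left:
  "is_path S E (xs @ ys) \<Longrightarrow> xs \<noteq> [] \<Longrightarrow> is_path S E xs"
proof (induction xs)
  case Nil then show ?case by simp
next
  case (Cons x xs)
  show ?case
  proof (cases "xs = []")
    case True then show ?thesis using Cons.prems by (simp add: is_path_Cons)
  next
    case False
    then show ?thesis using Cons by (auto simp: is_path_Cons)
  qed
qed

lemma is_path_append_right:
  "is_path S E (xs @ ys) \<Longrightarrow> ys \<noteq> [] \<Longrightarrow> is_path S E ys"
  by (induction xs) (auto simp: is_path_Cons)

lemma is_path_append_edge:
  "is_path S E (xs @ y # ys) \<Longrightarrow> xs \<noteq> [] \<Longrightarrow> E (last xs) y"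
proof (induction xs)
  case Nil then show ?case by simp
next
  case (Cons x xs)
  show ?case
  proof (cases "xs = []")
    case True then show ?thesis using Cons.prems by (simp add: is_path_Cons)
  next
    case False
    then show ?thesis using Cons by (auto simp: is_path_Cons)
  qed
qed

lemma is_path_snoc:
  "is_path S E xs \<Longrightarrow> z \<in> S \<Longrightarrow> z \<notin> set xs \<Longrightarrow> E (last xs) z \<Longrightarrow> is_path S E (xs @ [z])"
proof (induction xs)
  case Nil then show ?case by (simp add: is_path_def)
next
  case (Cons x xs)
  show ?case
  proof (cases "xs = []")
    case True then show ?thesis using Cons.prems by (simp add: is_path_Cons)
  next
    case False
    then show ?thesis using Cons by (auto simp: is_path_Cons)
  qed
qed

lemma is_path_set: "is_path S E xs \<Longrightarrow> set xs \<subseteq> S"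
  by (simp add: is_path_def)

lemma is_path_distinct: "is_path S E xs \<Longrightarrow> distinct xs"
  by (simp add: is_path_def)

lemma is_path_nonempty: "is_path S E xs \<Longrightarrow> xs \<noteq> []"
  by (simp add: is_path_def)

lemma is_path_mono_rel:
  assumes "is_path S E xs" "\<And>p q. p \<in> set xs \<Longrightarrow> q \<in> set xs \<Longrightarrow> E p q \<Longrightarrow> E' p q"
  shows "is_path S E' xs"
  using assms unfolding is_path_def by (meson nth_mem Suc_lessD)

lemma is_path_restrict:
  "is_path S E xs \<Longrightarrow> set xs \<subseteq> T \<Longrightarrow> is_path T E xs"
  by (simp add: is_path_def)

lemma path_walk:
  "is_path S E xs \<Longrightarrow> (rS E S)\<^sup>*\<^sup>* (hd xs) (last xs)"
proof (induction xs)
  case Nil then show ?case by (simp add: is_path_def)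
next
  case (Cons x xs)
  show ?case
  proof (cases "xs = []")
    case True then show ?thesis by simp
  next
    case False
    then have "is_path S E xs" "x \<in> S" "E x (hd xs)" using Cons.prems by (auto simp: is_path_Cons)
    moreover have "hd xs \<in> S" using \<open>is_path S E xs\<close> False
      by (metis hd_in_set is_path_set subsetD)
    ultimately show ?thesis using Cons.IH False
      by (auto intro: converse_rtranclp_into_rtranclp)
  qed
qed

lemma walk_path:
  assumes "(rS E S)\<^sup>*\<^sup>* x y" "x \<in> S"
  shows "\<exists>xs. is_path S E xs \<and> hd xs = x \<and> last xs = y"
  using assms(1)
proof (induction rule: rtranclp_induct)
  case base
  then show ?case using assms(2) by (intro exI[of _ "[x]"]) simp
next
  case (step y z)
  then obtain xs where xs: "is_path S E xs" "hd xs = x" "last xs = y" by blast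
  show ?case
  proof (cases "z \<in> set xs")
    case True
    then obtain as bs where sp: "xs = as @ z # bs" by (meson split_list)
    have "is_path S E (as @ [z])" using xs(1) sp is_path_append_left[of S E "as @ [z]" bs] by simp
    moreover have "hd (as @ [z]) = x" using xs(2) sp by (cases as) auto
    ultimately show ?thesis by force
  next
    case False
    have "xs \<noteq> []" using xs(1) is_path_nonempty by auto
    then have "is_path S E (xs @ [z])" using is_path_snoc[OF xs(1)] step False xs(3) by auto
    moreover have "hd (xs @ [z]) = x" using xs(2) \<open>xs \<noteq> []\<close> by simp
    ultimately show ?thesis by force
  qed
qed

lemma rtranclp_sym:
  assumes "\<And>a b. r a b \<Longrightarrow> r b a" "r\<^sup>*\<^sup>* x y"
  shows "r\<^sup>*\<^sup>* y x"
  using assms(2)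
  by (induction rule: rtranclp_induct) (auto intro: converse_rtranclp_into_rtranclp assms(1))

lemma finite_paths: "finite S \<Longrightarrow> finite {xs. is_path S E xs}"
  by (rule finite_subset[OF _ finite_subset_distinct[of S]]) (auto simp: is_path_def)

lemma walk_cross:
  assumes "r\<^sup>*\<^sup>* x b" "x \<in> A" "b \<notin> A"
  shows "\<exists>a c. a \<in> A \<and> c \<notin> A \<and> r a c"
  using assms by (induction rule: rtranclp_induct) auto

lemma edges_finite:
  assumes "sym_graph V E" "finite V"
  shows "finite (edges E)"
proof -
  have "edges E \<subseteq> Pow V" using assms(1) unfolding edges_def sym_graph_def by auto
  then show ?thesis using assms(2) by (meson finite_Pow_iff finite_subset)
qed

lemma conn_edges:
  assumes sg: "sym_graph V E" and fin: "finite V" and con: "induces_connected E V"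
  shows "card V \<le> card (edges E) + 1"
proof -
  obtain x where x: "x \<in> V" using con unfolding induces_connected_def by auto
  have fe: "finite (edges E)" using edges_finite sg fin by blast
  have main: "n < card V \<Longrightarrow> \<exists>A. x \<in> A \<and> A \<subseteq> V \<and> card A = Suc n \<and> n \<le> card {e \<in> edges E. e \<subseteq> A}" for n
  proof (induction n)
    case 0
    then show ?case using x by (intro exI[of _ "{x}"]) auto
  next
    case (Suc n)
    then obtain A where A: "x \<in> A" "A \<subseteq> V" "card A = Suc n" "n \<le> card {e \<in> edges E. e \<subseteq> A}" by auto
    have "A \<noteq> V" using A(3) Suc.prems by auto
    then obtain b where b: "b \<in> V" "b \<notin> A" using A(2) by auto
    have "(rS E V)\<^sup>*\<^sup>* x b" using con x b unfolding induces_connected_def by blast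
    then obtain a c where ac: "a \<in> A" "c \<notin> A" "rS E V a c" using walk_cross[of "rS E V" x b A] A(1) b(2) by blast
    define A' where "A' = insert c A"
    have fA: "finite A" using A(2) fin finite_subset by auto
    have cA': "card A' = Suc (Suc n)" using A(3) ac(2) fA by (simp add: A'_def)
    have ed: "{a, c} \<in> edges E" using ac(3) unfolding edges_def by auto
    have sub: "insert {a, c} {e \<in> edges E. e \<subseteq> A} \<subseteq> {e \<in> edges E. e \<subseteq> A'}"
      using ed ac(1) unfolding A'_def by auto
    have nin: "{a, c} \<notin> {e \<in> edges E. e \<subseteq> A}" using ac(2) by auto
    have "card (insert {a, c} {e \<in> edges E. e \<subseteq> A}) \<le> card {e \<in> edges E. e \<subseteq> A'}"
      by (rule card_mono) (use fe sub in auto)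
    then have "Suc (card {e \<in> edges E. e \<subseteq> A}) \<le> card {e \<in> edges E. e \<subseteq> A'}"
      using nin fe by simp
    then show ?case using A cA' ac unfolding A'_def by (intro exI[of _ "insert c A"]) auto
  qed
  have "card V \<noteq> 0" using x fin by auto
  then obtain A where A: "A \<subseteq> V" "card (V) - 1 \<le> card {e \<in> edges E. e \<subseteq> A}"
    using main[of "card V - 1"] by auto
  have "card {e \<in> edges E. e \<subseteq> A} \<le> card (edges E)" using fe by (intro card_mono) auto
  then show ?thesis using A by linarith
qed




lemma tree_sym: "is_tree V E \<Longrightarrow> E a b \<Longrightarrow> E b a \<and> a \<noteq> b \<and> a \<in> V \<and> b \<in> V"
  by (simp add: is_tree_def sym_graph_def)

lemma no_two_branches:
  assumes T: "is_tree V E"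
    and p1: "is_path V E (x # a # as)" and p2: "is_path V E (x # b # bs)"
    and ab: "a \<noteq> b" and l: "last (a # as) = last (b # bs)"
  shows False
proof -
  have fin: "finite V" and sg: "sym_graph V E" and con: "induces_connected E V"
    and ce: "card (edges E) = card V - 1" using T by (auto simp: is_tree_def)
  define E' where "E' = (\<lambda>p q. E p q \<and> {p, q} \<noteq> {x, a})"
  have sg': "sym_graph V E'"
    unfolding sym_graph_def
  proof (intro allI impI)
    fix p q assume "E' p q"
    then have "E p q" "{p, q} \<noteq> {x, a}" unfolding E'_def by auto
    moreover have "{q, p} = {p, q}" by blast
    ultimately show "E' q p \<and> p \<noteq> q \<and> p \<in> V \<and> q \<in> V" using sg unfolding sym_graph_def E'_def by metis
  qed
  have Exa: "E x a" using p1 by (simp add: is_path_Cons)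
  have Exb: "E x b" using p2 by (simp add: is_path_Cons)
  have ed: "edges E' = edges E - {{x, a}}"
    unfolding edges_def E'_def by blast
  have xa: "{x, a} \<in> edges E" using Exa unfolding edges_def by auto
  have fe: "finite (edges E)" using edges_finite sg fin by blast
  have ce': "card (edges E') = card (edges E) - 1" using ed xa fe by simp
  have pa: "is_path V E (a # as)" and xna: "x \<notin> set (a # as)" using p1 by (auto simp: is_path_Cons)
  have pb: "is_path V E (b # bs)" and xnb: "x \<notin> set (b # bs)" using p2 by (auto simp: is_path_Cons)
  have pa': "is_path V E' (a # as)"
  proof (rule is_path_mono_rel[OF pa])
    fix p q assume "p \<in> set (a # as)" "q \<in> set (a # as)" "E p q"
    then have "x \<notin> {p, q}" using xna by blast
    then have "{p, q} \<noteq> {x, a}" by blast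
    then show "E' p q" using \<open>E p q\<close> unfolding E'_def by blast
  qed
  have pb': "is_path V E' (b # bs)"
  proof (rule is_path_mono_rel[OF pb])
    fix p q assume "p \<in> set (b # bs)" "q \<in> set (b # bs)" "E p q"
    then have "x \<notin> {p, q}" using xnb by blast
    then have "{p, q} \<noteq> {x, a}" by blast
    then show "E' p q" using \<open>E p q\<close> unfolding E'_def by blast
  qed
  have symr: "rS E' V p q \<Longrightarrow> rS E' V q p" for p q using sg' unfolding sym_graph_def by auto
  have w1: "(rS E' V)\<^sup>*\<^sup>* a (last (a # as))" using path_walk[OF pa'] by simp
  have w2: "(rS E' V)\<^sup>*\<^sup>* (last (b # bs)) b" using rtranclp_sym[OF symr path_walk[OF pb']] by simp
  have bx: "rS E' V b x"
  proof -
    have h: "E b x" "x \<noteq> b" "x \<in> V" "b \<in> V" using tree_sym[OF T Exb] by auto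
    have "{b, x} \<noteq> {x, a}" using h(2) ab by (simp add: doubleton_eq_iff)
    then show ?thesis using h unfolding E'_def by blast
  qed
  have wax: "(rS E' V)\<^sup>*\<^sup>* a x" 
  proof -
    have "(rS E' V)\<^sup>*\<^sup>* a (last (b # bs))" using w1 l by simp
    then have "(rS E' V)\<^sup>*\<^sup>* a b" using w2 by (rule rtranclp_trans)
    then show ?thesis using bx by (rule rtranclp.rtrancl_into_rtrancl)
  qed
  have wxa: "(rS E' V)\<^sup>*\<^sup>* x a" using rtranclp_sym[OF symr wax] .
  have con': "induces_connected E' V"
    unfolding induces_connected_def
  proof (intro conjI ballI)
    show "V \<noteq> {}" using con by (simp add: induces_connected_def)
    fix p q assume "p \<in> V" "q \<in> V"
    then have "(rS E V)\<^sup>*\<^sup>* p q" using con by (simp add: induces_connected_def)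
    then show "(rS E' V)\<^sup>*\<^sup>* p q"
    proof (induction rule: rtranclp_induct)
      case base then show ?case by simp
    next
      case (step y z)
      show ?case
      proof (cases "{y, z} = {x, a}")
        case True
        then have "(y = x \<and> z = a) \<or> (y = a \<and> z = x)" by (auto simp: doubleton_eq_iff)
        then have "(rS E' V)\<^sup>*\<^sup>* y z" using wax wxa by (elim disjE conjE) simp_all
        with step.IH show ?thesis by (rule rtranclp_trans)
      next
        case False
        then have "rS E' V y z" using step.hyps(2) by (simp add: E'_def)
        with step.IH show ?thesis by (rule rtranclp.rtrancl_into_rtrancl)
      qed
    qed
  qed
  have "card V \<le> card (edges E') + 1" using conn_edges[OF sg' fin con'] .
  moreover have "x \<in> V" "a \<in> V" "x \<noteq> a" using tree_sym[OF T Exa] by auto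
  moreover then have "card V \<ge> 2" using fin
    proof -
      have "card {x, a} = 2" using \<open>x \<noteq> a\<close> by simp
      moreover have "card {x, a} \<le> card V" using fin \<open>x \<in> V\<close> \<open>a \<in> V\<close> by (intro card_mono) auto
      ultimately show ?thesis by simp
    qed
  ultimately show False using ce ce' by linarith
qed

lemma tree_path_unique:
  assumes T: "is_tree V E"
  shows "is_path V E xs \<Longrightarrow> is_path V E ys \<Longrightarrow> hd xs = hd ys \<Longrightarrow> last xs = last ys \<Longrightarrow> xs = ys"
proof (induction xs arbitrary: ys)
  case Nil then show ?case by (simp add: is_path_def)
next
  case (Cons x xs)
  obtain y ys' where ys: "ys = y # ys'" using Cons.prems(2) by (cases ys) (auto simp: is_path_def)
  have xy: "x = y" using Cons.prems(3) ys by simp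
  show ?case
  proof (cases "xs = []")
    case True
    then have "last ys = x" using Cons.prems(4) by simp
    then have "ys' = []" using Cons.prems(2) ys xy
      by (metis distinct.simps(2) is_path_distinct last.simps last_in_set)
    then show ?thesis using ys xy True by simp
  next
    case False
    show ?thesis
    proof (cases "ys' = []")
      case True
      then have "last (x # xs) = x" using Cons.prems(4) ys xy by simp
      then show ?thesis using Cons.prems(1) False
        by (metis distinct.simps(2) is_path_distinct last.simps last_in_set)
    next
      case False2: False
      obtain a as where xs: "xs = a # as" using False by (cases xs) auto
      obtain b bs where ys': "ys' = b # bs" using False2 by (cases ys') auto
      show ?thesis
      proof (cases "a = b")
        case True
        have "is_path V E xs" "is_path V E ys'" using Cons.prems(1,2) xs ys ys' by (auto simp: is_path_Cons)
        moreover have "last xs = last ys'" using Cons.prems(4) xs ys ys' by simp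
        moreover have "hd xs = hd ys'" using True xs ys' by simp
        ultimately have "xs = ys'" using Cons.IH by blast
        then show ?thesis using ys xy by simp
      next
        case False
        have "last (a # as) = last (b # bs)" using Cons.prems(4) xs ys ys' by simp
        then show ?thesis using no_two_branches[OF T, of x a as b bs] Cons.prems(1,2) xs ys ys' xy False
          by simp
      qed
    qed
  qed
qed

lemma tree_path_exists:
  assumes T: "is_tree V E" and "x \<in> V" "y \<in> V"
  shows "\<exists>xs. is_path V E xs \<and> hd xs = x \<and> last xs = y"
proof -
  have "induces_connected E V" using T by (simp add: is_tree_def)
  then have "(rS E V)\<^sup>*\<^sup>* x y" using assms(2,3) unfolding induces_connected_def by simp
  then show ?thesis using walk_path[OF _ assms(2)] by simp
qed




locale rt =
  fixes V :: "'a set" and E :: "'a \<Rightarrow> 'a \<Rightarrow> bool" and v :: 'a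
  assumes T: "is_tree V E" and vV: "v \<in> V"
begin

abbreviation "par w \<equiv> parent V E v w"
abbreviation "rk w \<equiv> rank V E v w"

lemma esym: "E a b \<Longrightarrow> E b a" and eirr: "E a b \<Longrightarrow> a \<noteq> b"
  and eV1: "E a b \<Longrightarrow> a \<in> V" and eV2: "E a b \<Longrightarrow> b \<in> V"
  using tree_sym[OF T] by blast+

lemma finV: "finite V" using T by (simp add: is_tree_def)

definition pth :: "'a \<Rightarrow> 'a list" where
  "pth z = (THE xs. is_path V E xs \<and> hd xs = v \<and> last xs = z)"

lemma pth: assumes "z \<in> V" shows "is_path V E (pth z)" "hd (pth z) = v" "last (pth z) = z"
proof -
  obtain xs where xs: "is_path V E xs" "hd xs = v" "last xs = z"
    using tree_path_exists[OF T vV assms] by (elim exE conjE) simp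
  have "pth z = xs" unfolding pth_def
  proof (rule the_equality)
    show "is_path V E xs \<and> hd xs = v \<and> last xs = z" using xs by simp
  next
    fix ys assume "is_path V E ys \<and> hd ys = v \<and> last ys = z"
    then show "ys = xs" using tree_path_unique[OF T, of ys xs] xs by simp
  qed
  then show "is_path V E (pth z)" "hd (pth z) = v" "last (pth z) = z" using xs by auto
qed

lemma pth_ne: "z \<in> V \<Longrightarrow> pth z \<noteq> []"
  using pth(1) is_path_nonempty by blast

lemma pth_eq: assumes "is_path V E xs" "hd xs = v" shows "pth (last xs) = xs"
proof -
  have ne: "xs \<noteq> []" using is_path_nonempty[OF assms(1)] .
  have l: "last xs \<in> V" using is_path_set[OF assms(1)] last_in_set[OF ne] by blast
  have "pth (last xs) = xs" using tree_path_unique[OF T pth(1)[OF l] assms(1)] pth(2,3)[OF l] assms(2) by simp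
  then show ?thesis .
qed

lemma pth_v: "pth v = [v]"
  using pth_eq[of "[v]"] vV by simp

lemma last_in_pth: assumes "z \<in> V" shows "z \<in> set (pth z)"
proof -
  have "last (pth z) \<in> set (pth z)" using pth_ne[OF assms] by (rule last_in_set)
  then show ?thesis using pth(3)[OF assms] by simp
qed

lemma pth_prefix: assumes "z \<in> V" "pth z = xs @ ys" "xs \<noteq> []" shows "pth (last xs) = xs"
proof -
  have "is_path V E (xs @ ys)" using pth(1)[OF assms(1)] assms(2) by simp
  then have "is_path V E xs" using is_path_append_left assms(3) by blast
  moreover have "hd xs = v" using pth(2)[OF assms(1)] assms(2,3) by simp
  ultimately show ?thesis by (rule pth_eq)
qed

lemma pth_mem: assumes "z \<in> V" "u \<in> set (pth z)" shows "\<exists>ys. pth z = pth u @ ys"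
proof -
  obtain as bs where sp: "pth z = as @ u # bs" using assms(2) by (meson split_list)
  have "pth u = as @ [u]" using pth_prefix[OF assms(1), of "as @ [u]" bs] sp by simp
  then show ?thesis using sp by simp
qed

lemma dich: assumes "E a b" shows "pth b = pth a @ [b] \<or> pth a = pth b @ [a]"
proof -
  have aV: "a \<in> V" and bV: "b \<in> V" using eV1 eV2 assms by auto
  show ?thesis
  proof (cases "b \<in> set (pth a)")
    case False
    have "is_path V E (pth a @ [b])"
      using is_path_snoc[OF pth(1)[OF aV] bV False] pth(3)[OF aV] assms by simp
    moreover have "hd (pth a @ [b]) = v" using pth(2)[OF aV] pth_ne[OF aV] by simp
    ultimately have "pth (last (pth a @ [b])) = pth a @ [b]" by (rule pth_eq)
    then show ?thesis by simp
  next
    case True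
    then obtain ys where ys: "pth a = pth b @ ys" using pth_mem aV by blast
    have "ys \<noteq> []" using ys pth(3)[OF aV] pth(3)[OF bV] eirr[OF assms] by auto
    then have "a \<in> set ys" using ys pth(3)[OF aV] by (metis last_appendR last_in_set)
    then have "a \<notin> set (pth b)" using ys is_path_distinct[OF pth(1)[OF aV]] by auto
    then have "is_path V E (pth b @ [a])"
      using is_path_snoc[OF pth(1)[OF bV] aV] pth(3)[OF bV] esym[OF assms] by simp
    moreover have "hd (pth b @ [a]) = v" using pth(2)[OF bV] pth_ne[OF bV] by simp
    ultimately have "pth (last (pth b @ [a])) = pth b @ [a]" by (rule pth_eq)
    then show ?thesis by simp
  qed
qed

lemma pth_inj: assumes "a \<in> V" "b \<in> V" "pth a = pth b" shows "a = b"
proof -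
  have "last (pth a) = last (pth b)" using assms(3) by simp
  then show ?thesis using pth(3)[OF assms(1)] pth(3)[OF assms(2)] by simp
qed

lemma par: assumes "w \<in> V" "w \<noteq> v"
  shows "pth w = pth (par w) @ [w]" "E (par w) w" "par w \<in> V"
proof -
  have ne: "pth w \<noteq> []" using pth_ne[OF assms(1)] .
  obtain zs where zs: "pth w = zs @ [w]"
  proof
    show "pth w = butlast (pth w) @ [w]" using append_butlast_last_id[OF ne] pth(3)[OF assms(1)] by simp
  qed
  have zsne: "zs \<noteq> []" using zs pth(2)[OF assms(1)] assms(2) by auto
  obtain ys p where ysp: "zs = ys @ [p]"
  proof
    show "zs = butlast zs @ [last zs]" using append_butlast_last_id[OF zsne] by simp
  qed
  have pw: "pth w = ys @ [p, w]" using zs ysp by simp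
  have P: "is_path V E (ys @ [p, w])" "hd (ys @ [p, w]) = v" using pth(1,2)[OF assms(1)] pw by auto
  have "par w = p"
    unfolding parent_def
  proof (rule the_equality)
    show "\<exists>xs. is_path V E (xs @ [p, w]) \<and> hd (xs @ [p, w]) = v" using P by blast
  next
    fix u assume "\<exists>xs. is_path V E (xs @ [u, w]) \<and> hd (xs @ [u, w]) = v"
    then obtain xs where xs: "is_path V E (xs @ [u, w])" "hd (xs @ [u, w]) = v" by blast
    have "pth (last (xs @ [u, w])) = xs @ [u, w]" using xs by (rule pth_eq)
    then have "ys @ [p, w] = xs @ [u, w]" using pw by simp
    then have "last (butlast (ys @ [p, w])) = last (butlast (xs @ [u, w]))" by simp
    then show "u = p" by (simp add: butlast_append)
  qed
  moreover have "pth p = ys @ [p]" using pth_prefix[OF assms(1), of "ys @ [p]" "[w]"] pw by simp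
  ultimately show "pth w = pth (par w) @ [w]" using pw by simp
  have "E (last (ys @ [p])) w" using is_path_append_edge[of V E "ys @ [p]" w "[]"] P(1) by simp
  then show "E (par w) w" using \<open>par w = p\<close> by simp
  then show "par w \<in> V" using eV1 by blast
qed

definition ch :: "'a \<Rightarrow> 'a set" where
  "ch w = {u. E w u \<and> pth u = pth w @ [u]}"

definition D :: "'a \<Rightarrow> 'a set" where
  "D w = {z \<in> V. w \<in> set (pth z)}"

lemma ch_props: assumes "u \<in> ch w" shows "u \<in> V" "E w u" "pth u = pth w @ [u]" "u \<noteq> v" "w \<in> V"
proof -
  show E: "E w u" and p: "pth u = pth w @ [u]" using assms by (auto simp: ch_def)
  show uV: "u \<in> V" and wV: "w \<in> V" using eV1[OF E] eV2[OF E] by auto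
  show "u \<noteq> v"
  proof
    assume "u = v"
    then have "pth v = pth w @ [v]" using p by simp
    then show False using pth_v pth_ne[OF wV] by simp
  qed
qed

lemma ch_finite: "finite (ch w)"
proof (rule finite_subset[OF _ finV])
  show "ch w \<subseteq> V" using ch_props(1) by blast
qed

lemma par_ch: assumes "u \<in> ch w" shows "par u = w"
proof -
  have uV: "u \<in> V" and uv: "u \<noteq> v" and wV: "w \<in> V" using ch_props[OF assms] by auto
  have "pth u = pth (par u) @ [u]" using par(1)[OF uV uv] .
  then have "pth (par u) = pth w" using ch_props(3)[OF assms] by simp
  then show ?thesis using pth_inj[OF par(3)[OF uV uv] wV] by simp
qed

lemma par_notin_ch: assumes "w \<in> V" "w \<noteq> v" shows "par w \<notin> ch w"
proof
  assume "par w \<in> ch w"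
  then have "pth (par w) = pth w @ [par w]" using ch_props(3) by blast
  moreover have "pth w = pth (par w) @ [w]" using par(1)[OF assms] .
  ultimately have "length (pth (par w)) = Suc (length (pth w))" "length (pth w) = Suc (length (pth (par w)))"
    by simp_all
  then show False by simp
qed

lemma nbr: assumes "w \<in> V"
  shows "{u. E w u} = ch w \<union> (if w = v then {} else {par w})"
proof (intro set_eqI iffI)
  fix u assume "u \<in> {u. E w u}"
  then have E: "E w u" by simp
  show "u \<in> ch w \<union> (if w = v then {} else {par w})"
  proof (cases "pth u = pth w @ [u]")
    case True then show ?thesis using E by (simp add: ch_def)
  next
    case False
    then have pw: "pth w = pth u @ [w]" using dich[OF E] by blast
    have uV: "u \<in> V" using eV2 E by blast
    have wv: "w \<noteq> v"
    proof
      assume "w = v"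
      then have "[v] = pth u @ [v]" using pw pth_v by simp
      then show False using pth_ne[OF uV] by simp
    qed
    have "pth u = pth (par w)" using par(1)[OF assms wv] pw by simp
    then have "u = par w" using pth_inj[OF uV par(3)[OF assms wv]] by simp
    then show ?thesis using wv by simp
  qed
next
  fix u assume u: "u \<in> ch w \<union> (if w = v then {} else {par w})"
  show "u \<in> {u. E w u}"
  proof (cases "u \<in> ch w")
    case True then show ?thesis using ch_props(2) by blast
  next
    case False
    then have "w \<noteq> v" "u = par w" using u by (auto split: if_splits)
    then show ?thesis using esym[OF par(2)[OF assms]] by simp
  qed
qed

lemma degree_eq: assumes "w \<in> V"
  shows "degree E w = card (ch w) + (if w = v then 0 else 1)"
proof (cases "w = v")
  case True then show ?thesis using nbr[OF assms] by (simp add: degree_def)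
next
  case False
  have "degree E w = card (ch w \<union> {par w})" using nbr[OF assms] False by (simp add: degree_def)
  also have "\<dots> = card (ch w) + 1" using par_notin_ch[OF assms False] ch_finite by simp
  finally show ?thesis using False by simp
qed

lemma D_self: "w \<in> V \<Longrightarrow> w \<in> D w"
  using last_in_pth by (simp add: D_def)

lemma D_sub: "D w \<subseteq> V" by (auto simp: D_def)

lemma D_finite: "finite (D w)" using D_sub finV finite_subset by blast

lemma D_v: "D v = V"
proof (intro set_eqI iffI)
  fix z assume "z \<in> V"
  then have "hd (pth z) \<in> set (pth z)" using pth_ne hd_in_set by blast
  then show "z \<in> D v" using pth(2) \<open>z \<in> V\<close> by (simp add: D_def)
qed (simp add: D_def)

lemma D_ch_sub: assumes "u \<in> ch w" shows "D u \<subseteq> D w"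
proof
  fix z assume "z \<in> D u"
  then have z: "z \<in> V" "u \<in> set (pth z)" by (auto simp: D_def)
  obtain ys where "pth z = pth u @ ys" using pth_mem z by blast
  then have "pth z = pth w @ [u] @ ys" using ch_props(3)[OF assms] by simp
  moreover have "w \<in> set (pth w)" using last_in_pth ch_props(5)[OF assms] by blast
  ultimately show "z \<in> D w" using z by (simp add: D_def)
qed

lemma not_in_D_ch: assumes "u \<in> ch w" shows "w \<notin> D u"
proof
  assume "w \<in> D u"
  then have "u \<in> set (pth w)" by (simp add: D_def)
  moreover have "distinct (pth u)" using is_path_distinct pth(1) ch_props(1)[OF assms] by blast
  ultimately show False using ch_props(3)[OF assms] by simp
qed

lemma D_decomp: assumes "w \<in> V" shows "D w = insert w (\<Union>u\<in>ch w. D u)"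
proof (intro set_eqI iffI)
  fix z assume z: "z \<in> D w"
  show "z \<in> insert w (\<Union>u\<in>ch w. D u)"
  proof (cases "z = w")
    case True then show ?thesis by simp
  next
    case False
    have zV: "z \<in> V" "w \<in> set (pth z)" using z unfolding D_def by simp_all
    obtain ys where ys: "pth z = pth w @ ys" using pth_mem[OF zV(1,2)] by (elim exE)
    have "ys \<noteq> []"
    proof
      assume "ys = []"
      then have "pth z = pth w" using ys by simp
      then show False using pth_inj[OF zV(1) assms] False by simp
    qed
    then obtain u ys' where u: "ys = u # ys'" by (cases ys) auto
    have pu: "pth u = pth w @ [u]"
      using pth_prefix[OF zV(1), of "pth w @ [u]" ys'] ys u by simp
    have "is_path V E (pth w @ u # ys')" using pth(1)[OF zV(1)] ys u by simp
    then have "E (last (pth w)) u" using is_path_append_edge[of V E "pth w" u ys'] pth_ne[OF assms] by simp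
    then have "u \<in> ch w" using pu pth(3)[OF assms] by (simp add: ch_def)
    moreover have "z \<in> D u" using zV ys u by (simp add: D_def)
    ultimately show ?thesis by blast
  qed
next
  fix z assume z: "z \<in> insert w (\<Union>u\<in>ch w. D u)"
  show "z \<in> D w"
  proof (cases "z = w")
    case True then show ?thesis using D_self[OF assms] by simp
  next
    case False
    then obtain u where "u \<in> ch w" "z \<in> D u" using z by blast
    then show ?thesis using D_ch_sub by blast
  qed
qed

lemma D_disj: assumes "u1 \<in> ch w" "u2 \<in> ch w" "u1 \<noteq> u2" shows "D u1 \<inter> D u2 = {}"
proof (rule ccontr)
  assume "D u1 \<inter> D u2 \<noteq> {}"
  then obtain z where z: "z \<in> D u1" "z \<in> D u2" by blast
  have zV: "z \<in> V" "u1 \<in> set (pth z)" "u2 \<in> set (pth z)" using z by (auto simp: D_def)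
  obtain ys1 where y1: "pth z = pth u1 @ ys1" using pth_mem zV(1,2) by blast
  obtain ys2 where y2: "pth z = pth u2 @ ys2" using pth_mem zV(1,3) by blast
  have "pth w @ u1 # ys1 = pth w @ u2 # ys2" using y1 y2 ch_props(3)[OF assms(1)] ch_props(3)[OF assms(2)] by simp
  then show False using assms(3) by simp
qed

lemma D_cross: assumes "a \<in> D u" "b \<notin> D u" "E a b"
  shows "a = u \<and> pth u = pth b @ [u]"
proof -
  have aV: "a \<in> V" "u \<in> set (pth a)" using assms(1) by (auto simp: D_def)
  have bV: "b \<in> V" using eV2 assms(3) by blast
  have nb: "u \<notin> set (pth b)" using assms(2) bV by (simp add: D_def)
  show ?thesis
  proof (cases "pth b = pth a @ [b]")
    case True then show ?thesis using aV nb by simp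
  next
    case False
    then have pa: "pth a = pth b @ [a]" using dich[OF assms(3)] by blast
    then have "u = a" using aV nb by simp
    then show ?thesis using pa by simp
  qed
qed

lemma cut_cross: assumes "u \<in> ch w" "K \<subseteq> ch w" "u \<notin> K"
  and "a \<in> insert w (\<Union>u'\<in>K. D u')" "b \<in> D u" "E a b"
  shows "a = w \<and> b = u"
proof -
  have wV: "w \<in> V" using ch_props(5)[OF assms(1)] .
  have aV: "a \<in> V" using eV1 assms(6) by blast
  have "a \<notin> D u"
  proof
    assume aD: "a \<in> D u"
    show False
    proof (cases "a = w")
      case True then show False using aD not_in_D_ch[OF assms(1)] by simp
    next
      case False
      then obtain u' where u': "u' \<in> K" "a \<in> D u'" using assms(4) by blast
      have "u' \<noteq> u" using u'(1) assms(3) by blast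
      then have "D u \<inter> D u' = {}" using D_disj[OF assms(1), of u'] assms(2) u'(1) by blast
      then show False using aD u'(2) by blast
    qed
  qed
  then have bu: "b = u \<and> pth u = pth a @ [u]" using D_cross[OF assms(5) _ esym[OF assms(6)]] by blast
  then have "pth a = pth w" using ch_props(3)[OF assms(1)] by simp
  then show ?thesis using pth_inj[OF aV wV] bu by simp
qed

lemma path_in_D:
  "p \<in> V \<Longrightarrow> pth w = pth p @ [w] \<Longrightarrow> is_path V E xs \<Longrightarrow> hd xs = w \<Longrightarrow> p \<notin> set xs \<Longrightarrow> set xs \<subseteq> D w"
proof (induction xs arbitrary: w p)
  case Nil then show ?case by simp
next
  case (Cons x xs)
  have xw: "x = w" using Cons.prems(4) by simp
  have wV: "w \<in> V" using Cons.prems(3) xw by (simp add: is_path_Cons)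
  show ?case
  proof (cases "xs = []")
    case True then show ?thesis using xw D_self[OF wV] by simp
  next
    case False
    obtain u ys where u: "xs = u # ys" using False by (cases xs) auto
    have Ewu: "E w u" and pxs: "is_path V E xs" and wn: "w \<notin> set xs"
      using Cons.prems(3) xw u by (auto simp: is_path_Cons)
    have up: "u \<noteq> p" using Cons.prems(5) u by auto
    have uV: "u \<in> V" using eV2 Ewu by blast
    have pu: "pth u = pth w @ [u]"
    proof (rule ccontr)
      assume "pth u \<noteq> pth w @ [u]"
      then have "pth w = pth u @ [w]" using dich[OF Ewu] by blast
      then have "pth u = pth p" using Cons.prems(2) by simp
      then show False using pth_inj[OF uV Cons.prems(1)] up by simp
    qed
    have "set xs \<subseteq> D u" using Cons.IH[OF wV pu pxs _ wn] u by simp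
    moreover have "u \<in> ch w" using Ewu pu by (simp add: ch_def)
    ultimately show ?thesis using D_ch_sub xw D_self[OF wV] by auto
  qed
qed

lemma par_notin_D: assumes "w \<in> V" "w \<noteq> v" shows "par w \<notin> D w"
proof
  assume "par w \<in> D w"
  then have "w \<in> set (pth (par w))" by (simp add: D_def)
  moreover have "distinct (pth w)" using is_path_distinct pth(1)[OF assms(1)] by blast
  ultimately show False using par(1)[OF assms] by simp
qed

lemma rk_fin: "finite {length xs - 1 |xs. is_path V E xs \<and> hd xs = w \<and> par w \<notin> set xs}"
proof -
  have "finite {xs. is_path V E xs \<and> hd xs = w \<and> par w \<notin> set xs}"
    by (rule finite_subset[OF _ finite_paths[OF finV]]) blast
  then show ?thesis by (rule finite_image_set)
qed

lemma rk_ge: assumes "is_path V E xs" "hd xs = w" "par w \<notin> set xs"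
  shows "length xs - 1 \<le> rk w"
proof -
  have "length xs - 1 \<in> {length xs - 1 |xs. is_path V E xs \<and> hd xs = w \<and> par w \<notin> set xs}"
    using assms by blast
  then show ?thesis unfolding rank_def using rk_fin by (rule Max_ge[rotated])
qed

lemma par_neq: assumes "w \<in> V" "w \<noteq> v" shows "par w \<noteq> w"
  using eirr[OF par(2)[OF assms]] .

lemma rk_attained: assumes "w \<in> V" "w \<noteq> v"
  shows "\<exists>xs. is_path V E xs \<and> hd xs = w \<and> par w \<notin> set xs \<and> rk w = length xs - 1"
proof -
  have "[w] \<in> {xs. is_path V E xs \<and> hd xs = w \<and> par w \<notin> set xs}"
    using assms par_neq[OF assms] by simp
  then have ne: "{length xs - 1 |xs. is_path V E xs \<and> hd xs = w \<and> par w \<notin> set xs} \<noteq> {}" by blast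
  have "rk w \<in> {length xs - 1 |xs. is_path V E xs \<and> hd xs = w \<and> par w \<notin> set xs}"
    unfolding rank_def using rk_fin ne by (rule Max_in)
  then show ?thesis by blast
qed

lemma rk_lt: assumes "w \<in> V" "w \<noteq> v" shows "rk w < card V"
proof -
  obtain xs where xs: "is_path V E xs" "rk w = length xs - 1" using rk_attained[OF assms] by blast
  have "length xs = card (set xs)" using distinct_card[OF is_path_distinct[OF xs(1)]] by simp
  also have "\<dots> \<le> card V" using is_path_set[OF xs(1)] finV by (rule card_mono[rotated])
  finally have "length xs \<le> card V" .
  moreover have "length xs \<ge> 1" using is_path_nonempty[OF xs(1)] by (cases xs) auto
  ultimately show ?thesis using xs(2) by linarith
qed

lemma R1: assumes "u \<in> ch w" "w \<noteq> v" shows "rk u + 1 \<le> rk w"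
proof -
  have uV: "u \<in> V" and uv: "u \<noteq> v" and wV: "w \<in> V" and Ewu: "E w u" using ch_props[OF assms(1)] by auto
  obtain xs where xs: "is_path V E xs" "hd xs = u" "par u \<notin> set xs" "rk u = length xs - 1"
    using rk_attained[OF uV uv] by blast
  have pu: "par u = w" using par_ch[OF assms(1)] .
  have sD: "set xs \<subseteq> D u" using path_in_D[OF par(3)[OF uV uv] par(1)[OF uV uv] xs(1,2,3)] .
  have ne: "xs \<noteq> []" using is_path_nonempty[OF xs(1)] .
  have wn: "w \<notin> set xs" using sD not_in_D_ch[OF assms(1)] by blast
  have p2: "is_path V E (w # xs)" using wV ne xs(1) wn Ewu xs(2) by (simp add: is_path_Cons)
  have "par w \<notin> D w" using par_notin_D[OF wV assms(2)] .
  then have "par w \<notin> set xs" using sD D_ch_sub[OF assms(1)] by blast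
  then have "par w \<notin> set (w # xs)" using par_neq[OF wV assms(2)] by simp
  then have "length (w # xs) - 1 \<le> rk w" using rk_ge[OF p2] by simp
  then show ?thesis using xs(4) ne by (cases xs) auto
qed

lemma R2: assumes "w \<in> V" "w \<noteq> v" "0 < rk w" shows "\<exists>u\<in>ch w. rk w = rk u + 1"
proof -
  obtain xs where xs: "is_path V E xs" "hd xs = w" "par w \<notin> set xs" "rk w = length xs - 1"
    using rk_attained[OF assms(1,2)] by blast
  obtain u ys where u: "xs = w # u # ys"
  proof -
    obtain x xs' where "xs = x # xs'" using is_path_nonempty[OF xs(1)] by (cases xs) auto
    moreover then obtain u ys where "xs' = u # ys" using xs(4) assms(3) by (cases xs') auto
    ultimately show ?thesis using that xs(2) by simp
  qed
  have Ewu: "E w u" and pu: "is_path V E (u # ys)" and wn: "w \<notin> set (u # ys)"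
    using xs(1) u by (auto simp: is_path_Cons)
  have upw: "u \<noteq> par w" using xs(3) u by auto
  have "u \<in> {u. E w u}" using Ewu by simp
  then have uch: "u \<in> ch w" using nbr[OF assms(1)] upw assms(2) by auto
  have "par u = w" using par_ch[OF uch] .
  then have "length (u # ys) - 1 \<le> rk u" using rk_ge[OF pu] wn by simp
  moreover have "rk u + 1 \<le> rk w" using R1[OF uch assms(2)] .
  ultimately have "rk w = rk u + 1" using xs(4) u by simp
  then show ?thesis using uch by blast
qed

lemma R3: assumes "w \<in> V" "w \<noteq> v" "ch w = {}" shows "rk w = 0"
  using R2[OF assms(1,2)] assms(3) by blast

end



definition Sub :: "('a \<Rightarrow> 'a \<Rightarrow> bool) \<Rightarrow> 'a set \<Rightarrow> 'a \<Rightarrow> 'a set set" where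
  "Sub E A w = {S. S \<subseteq> A \<and> w \<in> S \<and> induces_connected E S}"

lemma cross_walk:
  assumes sym: "\<And>a b. E a b \<Longrightarrow> E b a" and disj: "A \<inter> B = {}"
    and cr: "\<And>a b. a \<in> A \<Longrightarrow> b \<in> B \<Longrightarrow> E a b \<Longrightarrow> a = x \<and> b = y"
    and SAB: "S \<subseteq> A \<union> B" and w: "(rS E S)\<^sup>*\<^sup>* p q" and pA: "p \<in> A"
  shows "(q \<in> A \<longrightarrow> (rS E (S \<inter> A))\<^sup>*\<^sup>* p q) \<and>
         (q \<in> B \<longrightarrow> (rS E (S \<inter> A))\<^sup>*\<^sup>* p x \<and> x \<in> S \<and> y \<in> S \<and> (rS E (S \<inter> B))\<^sup>*\<^sup>* y q)"
  using w
proof (induction rule: rtranclp_induct)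
  case base
  then show ?case using pA disj by auto
next
  case (step q r)
  have qr: "E q r" "q \<in> S" "r \<in> S" using step.hyps(2) by auto
  have qAB: "q \<in> A \<or> q \<in> B" and rAB: "r \<in> A \<or> r \<in> B" using qr SAB by auto
  show ?case
  proof (cases "q \<in> A")
    case qA: True
    then have W: "(rS E (S \<inter> A))\<^sup>*\<^sup>* p q" using step.IH by blast
    show ?thesis
    proof (cases "r \<in> A")
      case True
      then have "rS E (S \<inter> A) q r" using qr qA by auto
      then have "(rS E (S \<inter> A))\<^sup>*\<^sup>* p r" using W by (rule rtranclp.rtrancl_into_rtrancl[rotated])
      then show ?thesis using True disj by auto
    next
      case False
      then have rB: "r \<in> B" using rAB by simp
      have "q = x \<and> r = y" using cr[OF qA rB qr(1)] .
      then show ?thesis using W qr False by auto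
    qed
  next
    case qnA: False
    then have qB: "q \<in> B" using qAB by simp
    then have W: "(rS E (S \<inter> A))\<^sup>*\<^sup>* p x" "x \<in> S" "y \<in> S" "(rS E (S \<inter> B))\<^sup>*\<^sup>* y q"
      using step.IH by blast+
    show ?thesis
    proof (cases "r \<in> B")
      case True
      then have "rS E (S \<inter> B) q r" using qr qB by auto
      then have "(rS E (S \<inter> B))\<^sup>*\<^sup>* y r" using W(4) by (rule rtranclp.rtrancl_into_rtrancl[rotated])
      then show ?thesis using True disj W by auto
    next
      case False
      then have rA: "r \<in> A" using rAB by simp
      have "r = x \<and> q = y" using cr[OF rA qB sym[OF qr(1)]] .
      then show ?thesis using W False by auto
    qed
  qed
qed

lemma conn_root:
  assumes sym: "\<And>a b. E a b \<Longrightarrow> E b a" and "x \<in> S" and "\<And>p. p \<in> S \<Longrightarrow> (rS E S)\<^sup>*\<^sup>* x p"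
  shows "induces_connected E S"
  unfolding induces_connected_def
proof (intro conjI ballI)
  show "S \<noteq> {}" using assms(2) by blast
  fix p q assume "p \<in> S" "q \<in> S"
  have symr: "rS E S a b \<Longrightarrow> rS E S b a" for a b using sym by blast
  have "(rS E S)\<^sup>*\<^sup>* p x" using rtranclp_sym[OF symr assms(3)[OF \<open>p \<in> S\<close>]] .
  then show "(rS E S)\<^sup>*\<^sup>* p q" using assms(3)[OF \<open>q \<in> S\<close>] by (rule rtranclp_trans)
qed

lemma rS_mono: "S \<subseteq> S' \<Longrightarrow> (rS E S)\<^sup>*\<^sup>* a b \<Longrightarrow> (rS E S')\<^sup>*\<^sup>* a b"
  by (erule rtranclp_mono[THEN predicate2D, rotated]) auto

lemma cut_Sub:
  assumes sym: "\<And>a b. E a b \<Longrightarrow> E b a" and disj: "A \<inter> B = {}"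
    and xA: "x \<in> A" and yB: "y \<in> B" and Exy: "E x y"
    and cr: "\<And>a b. a \<in> A \<Longrightarrow> b \<in> B \<Longrightarrow> E a b \<Longrightarrow> a = x \<and> b = y"
  shows "Sub E (A \<union> B) x = (\<lambda>(S1, S2). S1 \<union> S2) ` (Sub E A x \<times> insert {} (Sub E B y))"
    and "inj_on (\<lambda>(S1, S2). S1 \<union> S2) (Sub E A x \<times> insert {} (Sub E B y))"
proof -
  have cr': "\<And>b a. b \<in> B \<Longrightarrow> a \<in> A \<Longrightarrow> E b a \<Longrightarrow> b = y \<and> a = x"
    using cr sym by blast
  have disj': "B \<inter> A = {}" using disj by blast
  have symr: "\<And>S a b. rS E S a b \<Longrightarrow> rS E S b a" using sym by blast
  show "Sub E (A \<union> B) x = (\<lambda>(S1, S2). S1 \<union> S2) ` (Sub E A x \<times> insert {} (Sub E B y))"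
  proof (intro set_eqI iffI)
    fix S assume S: "S \<in> Sub E (A \<union> B) x"
    have SAB: "S \<subseteq> A \<union> B" and xS: "x \<in> S" and con: "induces_connected E S"
      using S by (auto simp: Sub_def)
    have walk: "\<And>p q. p \<in> S \<Longrightarrow> q \<in> S \<Longrightarrow> (rS E S)\<^sup>*\<^sup>* p q"
      using con by (simp add: induces_connected_def)
    have S1: "S \<inter> A \<in> Sub E A x"
    proof -
      have "induces_connected E (S \<inter> A)"
        unfolding induces_connected_def
      proof (intro conjI ballI)
        show "S \<inter> A \<noteq> {}" using xS xA by blast
        fix p q assume "p \<in> S \<inter> A" "q \<in> S \<inter> A"
        then show "(rS E (S \<inter> A))\<^sup>*\<^sup>* p q"
          using cross_walk[OF sym disj cr SAB walk[of p q]] by blast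
      qed
      then show ?thesis using xS xA by (auto simp: Sub_def)
    qed
    have S2: "S \<inter> B \<in> insert {} (Sub E B y)"
    proof (cases "S \<inter> B = {}")
      case True then show ?thesis by simp
    next
      case False
      then obtain p0 where p0: "p0 \<in> S \<inter> B" by blast
      have yS: "y \<in> S" using cross_walk[OF sym disj cr SAB walk[of x p0] xA] p0 xS by blast
      have fromy: "\<And>q. q \<in> S \<inter> B \<Longrightarrow> (rS E (S \<inter> B))\<^sup>*\<^sup>* y q"
        using cross_walk[OF sym disj cr SAB walk[of x] xA] xS by blast
      have "induces_connected E (S \<inter> B)"
        by (rule conn_root[where E = E and x = y, OF sym]) (use yS yB fromy in auto)
      then show ?thesis using yS yB by (auto simp: Sub_def)
    qed
    have eqS: "S = (\<lambda>(S1, S2). S1 \<union> S2) (S \<inter> A, S \<inter> B)" using SAB by auto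
    have mem: "(S \<inter> A, S \<inter> B) \<in> Sub E A x \<times> insert {} (Sub E B y)" using S1 S2 by simp
    show "S \<in> (\<lambda>(S1, S2). S1 \<union> S2) ` (Sub E A x \<times> insert {} (Sub E B y))"
      using eqS mem by (rule image_eqI)
  next
    fix S assume "S \<in> (\<lambda>(S1, S2). S1 \<union> S2) ` (Sub E A x \<times> insert {} (Sub E B y))"
    then obtain S1 S2 where S: "S = S1 \<union> S2" and S1: "S1 \<in> Sub E A x" and S2: "S2 \<in> insert {} (Sub E B y)"
      by auto
    have S1p: "S1 \<subseteq> A" "x \<in> S1" "induces_connected E S1" using S1 by (auto simp: Sub_def)
    have S2p: "S2 \<subseteq> B" using S2 by (auto simp: Sub_def)
    have "\<And>p. p \<in> S \<Longrightarrow> (rS E S)\<^sup>*\<^sup>* x p"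
    proof -
      fix p assume pS: "p \<in> S"
      show "(rS E S)\<^sup>*\<^sup>* x p"
      proof (cases "p \<in> S1")
        case True
        then have "(rS E S1)\<^sup>*\<^sup>* x p" using S1p(2,3) by (simp add: induces_connected_def)
        then show ?thesis using rS_mono[of S1 S] S by blast
      next
        case False
        then have pS2: "p \<in> S2" using pS S by blast
        then have S2p': "y \<in> S2" "induces_connected E S2" using S2 by (auto simp: Sub_def)
        then have "(rS E S2)\<^sup>*\<^sup>* y p" using pS2 by (simp add: induces_connected_def)
        then have W: "(rS E S)\<^sup>*\<^sup>* y p" using rS_mono[of S2 S] S by blast
        have "rS E S x y" using Exy S1p(2) S2p'(1) S by blast
        then show ?thesis using W by (rule converse_rtranclp_into_rtranclp)
      qed
    qed
    then have "induces_connected E S" using conn_root[where E = E and x = x and S = S, OF sym] S S1p(2) by blast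
    then show "S \<in> Sub E (A \<union> B) x" using S S1p S2p by (auto simp: Sub_def)
  qed
  show "inj_on (\<lambda>(S1, S2). S1 \<union> S2) (Sub E A x \<times> insert {} (Sub E B y))"
  proof (rule inj_onI)
    fix P Q
    assume a: "P \<in> Sub E A x \<times> insert {} (Sub E B y)" "Q \<in> Sub E A x \<times> insert {} (Sub E B y)"
      and eq0: "(\<lambda>(S1, S2). S1 \<union> S2) P = (\<lambda>(S1, S2). S1 \<union> S2) Q"
    obtain S1 S2 where P: "P = (S1, S2)" by (cases P)
    obtain T1 T2 where Q: "Q = (T1, T2)" by (cases Q)
    have eq: "S1 \<union> S2 = T1 \<union> T2" using eq0 P Q by simp
    have "S1 \<subseteq> A" "T1 \<subseteq> A" "S2 \<subseteq> B" "T2 \<subseteq> B" using a P Q by (auto simp: Sub_def)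
    then have "S1 = (S1 \<union> S2) \<inter> A" "T1 = (T1 \<union> T2) \<inter> A" "S2 = (S1 \<union> S2) \<inter> B" "T2 = (T1 \<union> T2) \<inter> B"
      using disj by blast+
    then show "P = Q" using eq P Q by metis
  qed
qed

lemma Sub_finite: "finite A \<Longrightarrow> finite (Sub E A w)"
  by (rule finite_subset[of _ "Pow A"]) (auto simp: Sub_def)

lemma Sub_empty: "{} \<notin> Sub E A w"
  by (simp add: Sub_def)

lemma Sub_single: "Sub E {w} w = {{w}}"
proof -
  have "induces_connected E {w}" by (simp add: induces_connected_def)
  then show ?thesis by (auto simp: Sub_def)
qed

lemma cut_count:
  assumes sym: "\<And>a b. E a b \<Longrightarrow> E b a" and disj: "A \<inter> B = {}"
    and xA: "x \<in> A" and yB: "y \<in> B" and Exy: "E x y"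
    and cr: "\<And>a b. a \<in> A \<Longrightarrow> b \<in> B \<Longrightarrow> E a b \<Longrightarrow> a = x \<and> b = y"
    and fA: "finite A" and fB: "finite B"
  shows "real (card (Sub E (A \<union> B) x)) = real (card (Sub E A x)) * (1 + real (card (Sub E B y)))"
    and "(\<Sum>S\<in>Sub E (A \<union> B) x. real (card S)) =
         (\<Sum>S\<in>Sub E A x. real (card S)) * (1 + real (card (Sub E B y)))
         + real (card (Sub E A x)) * (\<Sum>S\<in>Sub E B y. real (card S))"
proof -
  define f :: "'a set \<times> 'a set \<Rightarrow> 'a set" where "f = (\<lambda>(S1, S2). S1 \<union> S2)"
  define X where "X = Sub E A x"
  define Y0 where "Y0 = Sub E B y"
  define Y where "Y = insert {} Y0"
  have img: "Sub E (A \<union> B) x = f ` (X \<times> Y)"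
    using cut_Sub(1)[where E = E, OF sym disj xA yB Exy cr] by (simp add: f_def X_def Y_def Y0_def)
  have inj: "inj_on f (X \<times> Y)"
    using cut_Sub(2)[where E = E, OF sym disj xA yB Exy cr] by (simp add: f_def X_def Y_def Y0_def)
  have fX: "finite X" using Sub_finite[OF fA] by (simp add: X_def)
  have fY0: "finite Y0" using Sub_finite[OF fB] by (simp add: Y0_def)
  have nY0: "{} \<notin> Y0" using Sub_empty by (simp add: Y0_def)
  have cY: "card Y = Suc (card Y0)" using fY0 nY0 by (simp add: Y_def)
  have "card (Sub E (A \<union> B) x) = card (X \<times> Y)" using img card_image[OF inj] by simp
  also have "\<dots> = card X * card Y" by (rule card_cartesian_product)
  finally show "real (card (Sub E (A \<union> B) x)) = real (card (Sub E A x)) * (1 + real (card (Sub E B y)))"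
    using cY by (simp add: X_def Y0_def algebra_simps)
  have XA: "\<And>S. S \<in> X \<Longrightarrow> S \<subseteq> A" by (simp add: X_def Sub_def)
  have YB: "\<And>S. S \<in> Y \<Longrightarrow> S \<subseteq> B" by (auto simp: Y_def Y0_def Sub_def)
  have cu: "\<And>S1 S2. S1 \<in> X \<Longrightarrow> S2 \<in> Y \<Longrightarrow> real (card (S1 \<union> S2)) = real (card S1) + real (card S2)"
  proof -
    fix S1 S2 assume "S1 \<in> X" "S2 \<in> Y"
    then have "S1 \<subseteq> A" "S2 \<subseteq> B" using XA YB by auto
    then have "finite S1" "finite S2" "S1 \<inter> S2 = {}" using fA fB disj finite_subset by blast+
    then show "real (card (S1 \<union> S2)) = real (card S1) + real (card S2)" by (simp add: card_Un_disjoint)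
  qed
  have "(\<Sum>S\<in>Sub E (A \<union> B) x. real (card S)) = (\<Sum>p\<in>X \<times> Y. real (card (f p)))"
    using img sum.reindex[OF inj, of "\<lambda>S. real (card S)"] by simp
  also have "\<dots> = (\<Sum>(S1, S2)\<in>X \<times> Y. real (card (f (S1, S2))))"
    by (simp add: case_prod_beta)
  also have "\<dots> = (\<Sum>S1\<in>X. \<Sum>S2\<in>Y. real (card (f (S1, S2))))"
    by (rule sum.cartesian_product[symmetric])
  also have "\<dots> = (\<Sum>S1\<in>X. \<Sum>S2\<in>Y. real (card S1) + real (card S2))"
    using cu by (simp add: f_def)
  also have "\<dots> = (\<Sum>S1\<in>X. real (card Y) * real (card S1) + (\<Sum>S2\<in>Y. real (card S2)))"
    by (simp add: sum.distrib)
  also have "\<dots> = real (card Y) * (\<Sum>S1\<in>X. real (card S1)) + real (card X) * (\<Sum>S2\<in>Y. real (card S2))"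
    by (simp add: sum.distrib sum_distrib_left)
  also have "(\<Sum>S2\<in>Y. real (card S2)) = (\<Sum>S2\<in>Y0. real (card S2))"
    using fY0 nY0 by (simp add: Y_def)
  finally show "(\<Sum>S\<in>Sub E (A \<union> B) x. real (card S)) =
         (\<Sum>S\<in>Sub E A x. real (card S)) * (1 + real (card (Sub E B y)))
         + real (card (Sub E A x)) * (\<Sum>S\<in>Sub E B y. real (card S))"
    using cY by (simp add: X_def Y0_def algebra_simps)
qed

lemma ineq1:
  fixes N S R Nu Su Ru c :: real
  assumes "N \<ge> 0" "S \<ge> N * (1 + R)" "Su \<ge> Nu * (1 + Ru)" "c + Ru \<le> (1 - c) * Nu" "Nu \<ge> 0"
  shows "S * (1 + Nu) + N * Su \<ge> N * (1 + Nu) * (1 + (R + c + Ru))"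
proof -
  have a: "S * (1 + Nu) \<ge> N * (1 + R) * (1 + Nu)" using assms(2,5) by (simp add: mult_right_mono)
  have "Su \<ge> (1 + Nu) * (c + Ru)" using assms(3,4) by (simp add: algebra_simps)
  then have b: "N * Su \<ge> N * ((1 + Nu) * (c + Ru))" using assms(1) by (simp add: mult_left_mono)
  have "N * (1 + Nu) * (1 + (R + c + Ru)) = N * (1 + R) * (1 + Nu) + N * ((1 + Nu) * (c + Ru))"
    by (simp add: algebra_simps)
  then show ?thesis using a b by linarith
qed

lemma ineq2:
  fixes N R Nu Ru c a :: real
  assumes "N \<ge> 1" "R \<le> (N - 1) / 2" "c + Ru \<le> a * Nu" "a \<le> 1/2" "Nu \<ge> 0"
  shows "R + c + Ru \<le> (N * (1 + Nu) - 1) / 2"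
proof -
  have "a * Nu \<le> (1/2) * Nu" using mult_right_mono[OF assms(4,5)] .
  moreover have "Nu \<le> N * Nu" using assms(1,5) by (simp add: mult_right_mono[of 1 N Nu, simplified])
  ultimately show ?thesis using assms(2,3) by (simp add: algebra_simps)
qed

context rt
begin

definition NN :: "'a set \<Rightarrow> 'a \<Rightarrow> real" where "NN A w = real (card (Sub E A w))"
definition SS :: "'a set \<Rightarrow> 'a \<Rightarrow> real" where "SS A w = (\<Sum>S\<in>Sub E A w. real (card S))"
definition RS :: "'a set \<Rightarrow> 'a \<Rightarrow> real" where "RS A w = (\<Sum>z\<in>A - {w}. cc (rk z))"
definition DK :: "'a \<Rightarrow> 'a set \<Rightarrow> 'a set" where "DK w K = insert w (\<Union>u\<in>K. D u)"

lemma DK_sub: "w \<in> V \<Longrightarrow> DK w K \<subseteq> V"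
  using D_sub by (auto simp: DK_def)

lemma split_K:
  assumes u: "u \<in> ch w" and K: "K \<subseteq> ch w" "u \<notin> K"
  shows "NN (DK w (insert u K)) w = NN (DK w K) w * (1 + NN (D u) u)"
    and "SS (DK w (insert u K)) w = SS (DK w K) w * (1 + NN (D u) u) + NN (DK w K) w * SS (D u) u"
    and "RS (DK w (insert u K)) w = RS (DK w K) w + cc (rk u) + RS (D u) u"
proof -
  have wV: "w \<in> V" and uV: "u \<in> V" and Ewu: "E w u" using ch_props[OF u] by auto
  have eq: "DK w (insert u K) = DK w K \<union> D u" by (auto simp: DK_def)
  have disj: "DK w K \<inter> D u = {}"
  proof -
    have "w \<notin> D u" using not_in_D_ch[OF u] .
    moreover have "D u' \<inter> D u = {}" if "u' \<in> K" for u'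
      using D_disj[of u' w u] that K u by blast
    ultimately show ?thesis by (auto simp: DK_def)
  qed
  have xA: "w \<in> DK w K" by (simp add: DK_def)
  have yB: "u \<in> D u" using D_self[OF uV] .
  have cr: "\<And>a b. a \<in> DK w K \<Longrightarrow> b \<in> D u \<Longrightarrow> E a b \<Longrightarrow> a = w \<and> b = u"
    using cut_cross[OF u K] unfolding DK_def by blast
  have fA: "finite (DK w K)" using DK_sub[OF wV] finV finite_subset by blast
  have fB: "finite (D u)" using D_finite .
  note cc = cut_count[where E = E, OF esym disj xA yB Ewu cr fA fB]
  show "NN (DK w (insert u K)) w = NN (DK w K) w * (1 + NN (D u) u)"
    using cc(1) eq by (simp add: NN_def)
  show "SS (DK w (insert u K)) w = SS (DK w K) w * (1 + NN (D u) u) + NN (DK w K) w * SS (D u) u"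
    using cc(2) eq by (simp add: NN_def SS_def)
  have e2: "DK w (insert u K) - {w} = (DK w K - {w}) \<union> D u" using eq not_in_D_ch[OF u] by blast
  have "RS (DK w (insert u K)) w = (\<Sum>z\<in>DK w K - {w}. cc (rk z)) + (\<Sum>z\<in>D u. cc (rk z))"
    unfolding RS_def e2 by (rule sum.union_disjoint) (use fA fB disj in auto)
  also have "(\<Sum>z\<in>D u. cc (rk z)) = cc (rk u) + (\<Sum>z\<in>D u - {u}. cc (rk z))"
    using sum.remove[OF fB yB] .
  finally show "RS (DK w (insert u K)) w = RS (DK w K) w + cc (rk u) + RS (D u) u"
    by (simp add: RS_def)
qed

lemma DK_empty: "DK w {} = {w}" by (simp add: DK_def)

lemma NN_single: "NN {w} w = 1" by (simp add: NN_def Sub_single)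
lemma SS_single: "SS {w} w = 1" by (simp add: SS_def Sub_single)
lemma RS_single: "RS {w} w = 0" by (simp add: RS_def)

lemma NN_nonneg: "NN A w \<ge> 0" by (simp add: NN_def)

definition P2 where "P2 u \<longleftrightarrow> cc (rk u) + RS (D u) u \<le> aa (rk u) * NN (D u) u"
definition P3 where "P3 u \<longleftrightarrow> SS (D u) u \<ge> NN (D u) u * (1 + RS (D u) u)"

lemma K_induct:
  assumes wV: "w \<in> V" and fK: "finite K"
  shows "K \<subseteq> ch w \<Longrightarrow> (\<forall>u\<in>K. P2 u \<and> P3 u) \<Longrightarrow>
    NN (DK w K) w = (\<Prod>u\<in>K. 1 + NN (D u) u) \<and>
    SS (DK w K) w \<ge> NN (DK w K) w * (1 + RS (DK w K) w) \<and>
    RS (DK w K) w \<le> (NN (DK w K) w - 1) / 2"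
  using fK
proof (induction K rule: finite_induct)
  case empty
  then show ?case by (simp add: DK_empty NN_single SS_single RS_single)
next
  case (insert u K)
  have u: "u \<in> ch w" and Ks: "K \<subseteq> ch w" using insert.prems by auto
  have IH: "NN (DK w K) w = (\<Prod>u\<in>K. 1 + NN (D u) u)"
       "SS (DK w K) w \<ge> NN (DK w K) w * (1 + RS (DK w K) w)"
       "RS (DK w K) w \<le> (NN (DK w K) w - 1) / 2"
    using insert.IH Ks insert.prems(2) by auto
  have Pu: "P2 u" "P3 u" using insert.prems(2) by auto
  note sp = split_K[OF u Ks insert.hyps(2)]
  have N1: "NN (DK w K) w \<ge> 1"
  proof -
    have "(\<Prod>u\<in>K. 1 + NN (D u) u) \<ge> 1"
      by (rule prod_ge_1) (simp add: NN_nonneg add_increasing2)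
    then show ?thesis using IH(1) by simp
  qed
  have c1: "NN (DK w (insert u K)) w = (\<Prod>u\<in>insert u K. 1 + NN (D u) u)"
    using sp(1) IH(1) insert.hyps by (simp add: algebra_simps)
  have c2: "SS (DK w (insert u K)) w \<ge> NN (DK w (insert u K)) w * (1 + RS (DK w (insert u K)) w)"
    unfolding sp
    by (rule ineq1) (use IH(2) N1 Pu NN_nonneg[of "D u" u] in \<open>auto simp: P2_def P3_def cc_aa\<close>)
  have c3: "RS (DK w (insert u K)) w \<le> (NN (DK w (insert u K)) w - 1) / 2"
    unfolding sp
    by (rule ineq2[where a = "aa (rk u)"]) (use IH(3) N1 Pu NN_nonneg[of "D u" u] aa_bounds in \<open>auto simp: P2_def\<close>)
  show ?case using c1 c2 c3 by blast
qed

end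




context rt
begin

lemma aa0: "aa 0 = 1/2" by (simp add: aa_def)
lemma cc0: "cc 0 = 1/2" by (simp add: cc_aa aa0)

lemma prod_ge2:
  assumes "finite K" "K \<noteq> {}" "\<And>u. u \<in> K \<Longrightarrow> f u \<ge> (1::real)"
  shows "(\<Prod>u\<in>K. 1 + f u) \<ge> 2"
proof -
  obtain u where u: "u \<in> K" using assms(2) by blast
  have "(\<Prod>u\<in>K. 1 + f u) = (1 + f u) * (\<Prod>u\<in>K - {u}. 1 + f u)"
    using prod.remove[OF assms(1) u] .
  moreover have "(\<Prod>u\<in>K - {u}. 1 + f u) \<ge> 1"
    by (rule prod_ge_1) (use assms(3) in force)
  moreover have "1 + f u \<ge> 2" using assms(3)[OF u] by simp
  ultimately show ?thesis
    by (metis mult_mono dual_order.trans le_numeral_extra(1) mult.right_neutral zero_le_numeral)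
qed

lemma nonroot:
  assumes cls: "\<forall>w\<in>V. w \<noteq> v \<longrightarrow> 2 \<le> degree E w \<longrightarrow> 3 \<le> degree E w"
  shows "w \<in> V \<Longrightarrow> w \<noteq> v \<Longrightarrow> NN (D w) w \<ge> 3 * 2 ^ (rk w) - 2 \<and> P2 w \<and> P3 w"
proof (induction "rk w" arbitrary: w rule: less_induct)
  case less
  have wV: "w \<in> V" and wv: "w \<noteq> v" using less.prems by auto
  show ?case
  proof (cases "ch w = {}")
    case True
    have Dw: "D w = {w}" using D_decomp[OF wV] True by simp
    have r0: "rk w = 0" using R3[OF wV wv True] .
    show ?thesis using Dw r0
      by (simp add: P2_def P3_def NN_single SS_single RS_single aa0 cc0)
  next
    case False
    have IH: "\<And>u. u \<in> ch w \<Longrightarrow> NN (D u) u \<ge> 3 * 2 ^ (rk u) - 2 \<and> P2 u \<and> P3 u"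
    proof -
      fix u assume u: "u \<in> ch w"
      have "rk u < rk w" using R1[OF u wv] by simp
      then show "NN (D u) u \<ge> 3 * 2 ^ (rk u) - 2 \<and> P2 u \<and> P3 u"
        using less.hyps ch_props[OF u] by blast
    qed
    have fch: "finite (ch w)" using ch_finite .
    have "card (ch w) \<ge> 1" using False fch by (simp add: Suc_leI card_gt_0_iff)
    then have "degree E w \<ge> 2" using degree_eq[OF wV] wv by simp
    then have "degree E w \<ge> 3" using cls wV wv by blast
    then have c2: "card (ch w) \<ge> 2" using degree_eq[OF wV] wv by simp
    obtain u0 where u0: "u0 \<in> ch w" using False by blast
    have rpos: "0 < rk w" using R1[OF u0 wv] by simp
    obtain u where u: "u \<in> ch w" and ru: "rk w = rk u + 1" using R2[OF wV wv rpos] by blast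
    define K where "K = ch w - {u}"
    have fK: "finite K" and Ks: "K \<subseteq> ch w" and uK: "u \<notin> K" using fch by (auto simp: K_def)
    have Kne: "K \<noteq> {}"
    proof
      assume "K = {}"
      then have "ch w \<subseteq> {u}" by (auto simp: K_def)
      then have "card (ch w) \<le> 1" using card_mono[of "{u}"] by fastforce
      then show False using c2 by simp
    qed
    have chK: "ch w = insert u K" using u by (auto simp: K_def)
    have allP: "\<forall>u\<in>ch w. P2 u \<and> P3 u" using IH by blast
    have Kres: "NN (DK w K) w = (\<Prod>u\<in>K. 1 + NN (D u) u)" "RS (DK w K) w \<le> (NN (DK w K) w - 1) / 2"
      using K_induct[OF wV fK Ks] allP Ks by auto
    have Dw: "D w = DK w (ch w)" using D_decomp[OF wV] by (simp add: DK_def)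
    have P3w: "P3 w"
      using K_induct[OF wV fch] allP Dw by (auto simp: P3_def)
    note sp = split_K[OF u Ks uK]
    define Q where "Q = NN (DK w K) w"
    define X where "X = 1 + NN (D u) u"
    have Q2: "Q \<ge> 2"
    proof -
      have "\<And>u'. u' \<in> K \<Longrightarrow> NN (D u') u' \<ge> 1"
      proof -
        fix u' assume "u' \<in> K"
        then have "NN (D u') u' \<ge> 3 * 2 ^ (rk u') - 2" using IH Ks by blast
        moreover have "(3::real) * 2 ^ (rk u') - 2 \<ge> 1"
        proof -
          have "(1::real) \<le> 2 ^ (rk u')" by simp
          then show ?thesis by linarith
        qed
        ultimately show "NN (D u') u' \<ge> 1" by linarith
      qed
      then show ?thesis using prod_ge2[OF fK Kne] Kres(1) by (simp add: Q_def)
    qed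
    have Nu: "NN (D u) u \<ge> 3 * 2 ^ (rk u) - 2" and P2u: "P2 u" using IH[OF u] by auto
    have NDw: "NN (D w) w = Q * X" using sp(1) Dw chK by (simp add: Q_def X_def)
    have RDw: "RS (D w) w = RS (DK w K) w + cc (rk u) + RS (D u) u" using sp(3) Dw chK by simp
    have X: "X \<ge> 3 * 2 ^ (rk w - 1) - 1" using Nu ru by (simp add: X_def)
    have P1w: "NN (D w) w \<ge> 3 * 2 ^ (rk w) - 2"
    proof -
      have "(1::real) \<le> 2 ^ (rk w - 1)" by simp
      then have X0: "X \<ge> 0" using X by linarith
      have "Q * X \<ge> 2 * X" using mult_right_mono[OF Q2 X0] .
      moreover have "2 * X \<ge> 3 * 2 ^ (rk w) - 2" using X ru by simp
      ultimately show ?thesis using NDw by linarith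
    qed
    have P2w: "P2 w"
    proof -
      have ki: "cc (rk w) + (Q - 1) / 2 + aa (rk w - 1) * (X - 1) \<le> aa (rk w) * Q * X"
        by (rule key_ineq) (use rpos Q2 X in auto)
      have "cc (rk u) + RS (D u) u \<le> aa (rk u) * NN (D u) u" using P2u by (simp add: P2_def)
      then have "cc (rk w) + RS (D w) w \<le> cc (rk w) + (Q - 1) / 2 + aa (rk w - 1) * (X - 1)"
        using RDw Kres(2) ru unfolding Q_def X_def by (simp, linarith)
      then show ?thesis using ki NDw by (simp add: P2_def mult.assoc)
    qed
    show ?thesis using P1w P2w P3w by blast
  qed
qed

lemma root_bound:
  assumes cls: "\<forall>w\<in>V. w \<noteq> v \<longrightarrow> 2 \<le> degree E w \<longrightarrow> 3 \<le> degree E w"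
  shows "SS V v \<ge> NN V v * (1 + RS V v)" and "NN V v \<ge> 1"
proof -
  have allP: "\<forall>u\<in>ch v. P2 u \<and> P3 u" using nonroot[OF cls] ch_props by blast
  have DV: "DK v (ch v) = V" using D_decomp[OF vV] D_v by (simp add: DK_def)
  have r: "NN V v = (\<Prod>u\<in>ch v. 1 + NN (D u) u)" "SS V v \<ge> NN V v * (1 + RS V v)"
    using K_induct[OF vV ch_finite[of v]] allP DV by auto
  show "SS V v \<ge> NN V v * (1 + RS V v)" using r(2) .
  have "(\<Prod>u\<in>ch v. 1 + NN (D u) u) \<ge> 1"
    by (rule prod_ge_1) (simp add: NN_nonneg add_increasing2)
  then show "NN V v \<ge> 1" using r(1) by simp
qed

end

theorem mainTheorem4:
  fixes V :: "'a set" and E :: "'a \<Rightarrow> 'a \<Rightarrow> bool" and v :: 'a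
  assumes "is_tree V E" and "v \<in> V" and "in_T3star V E v"
  shows "local_mean V E v \<ge> 1 + (\<Sum>j<card V. cc j * real (m_rank V E v j))"
proof -
  interpret rt V E v using assms(1,2) by unfold_locales
  have cls: "\<forall>w\<in>V. w \<noteq> v \<longrightarrow> 2 \<le> degree E w \<longrightarrow> 3 \<le> degree E w"
    using assms(3) unfolding in_T3star_def by auto
  note rb = root_bound[OF cls]
  have lm: "local_mean V E v = SS V v / NN V v"
    by (simp add: local_mean_def SS_def NN_def subtrees_at_def Sub_def)
  have "SS V v / NN V v \<ge> 1 + RS V v"
    using rb by (simp add: pos_le_divide_eq mult.commute)
  moreover have "RS V v = (\<Sum>j<card V. cc j * real (m_rank V E v j))"
  proof -
    have "RS V v = (\<Sum>z\<in>V - {v}. cc (rk z))" by (simp add: RS_def)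
    also have "\<dots> = (\<Sum>j<card V. \<Sum>z\<in>{z \<in> V - {v}. rk z = j}. cc (rk z))"
      by (rule sum.group[symmetric]) (use finV rk_lt in auto)
    also have "\<dots> = (\<Sum>j<card V. cc j * real (m_rank V E v j))"
    proof (rule sum.cong[OF refl])
      fix j assume "j \<in> {..<card V}"
      have "(\<Sum>z\<in>{z \<in> V - {v}. rk z = j}. cc (rk z)) = (\<Sum>z\<in>{z \<in> V - {v}. rk z = j}. cc j)"
        by (rule sum.cong) auto
      also have "\<dots> = cc j * real (card {z \<in> V - {v}. rk z = j})" by simp
      also have "{z \<in> V - {v}. rk z = j} = {w \<in> V. w \<noteq> v \<and> rank V E v w = j}" by auto
      finally show "(\<Sum>z\<in>{z \<in> V - {v}. rk z = j}. cc (rk z)) = cc j * real (m_rank V E v j)"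
        by (simp add: m_rank_def)
    qed
    finally show ?thesis .
  qed
  ultimately show ?thesis using lm by simp
qed


end
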